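(* Let $\mathscr H$ be a complex Hilbert space and $\mathbf{T}=(T_1,\dots,T_d)\in\mathbb{B}(\mathscr H)^d$. Then $$\frac{1}{d}\,w_e(\mathbf{T}^2)\le w_e^2(\mathbf{T}).$$
   Context: $\mathbb{B}(\mathscr H)$ denotes the bounded linear operators on $\mathscr H$. For a $d$-tuple $\mathbf{T}=(T_1,\dots,T_d)\in\mathbb{B}(\mathscr H)^d$, the Euclidean operator radius is $w_e(\mathbf{T})=\sup\{(\sum_{k=1}^d|\langle T_kx,x\rangle|^2)^{1/2}: x\in\mathscr H,\ \|x\|=1\}$. Powers are componentwise: $\mathbf{T}^n=(T_1^n,\dots,T_d^n)$. *)

theory Defs
  imports "HOL-Analysis.Analysis"
begin

class complex_vector = real_normed_vector +
  fixes scaleC :: "complex \<Rightarrow> 'a \<Rightarrow> 'a" (infixr \<open>*\<^sub>C\<close> 75)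
  assumes scaleC_add_right: "a *\<^sub>C (x + y) = a *\<^sub>C x + a *\<^sub>C y"
    and scaleC_add_left: "(a + b) *\<^sub>C x = a *\<^sub>C x + b *\<^sub>C x"
    and scaleC_scaleC: "a *\<^sub>C (b *\<^sub>C x) = (a * b) *\<^sub>C x"
    and scaleC_one: "1 *\<^sub>C x = x"
    and scaleR_scaleC: "scaleR r x = complex_of_real r *\<^sub>C x"

class complex_inner = complex_vector +
  fixes cinner :: "'a \<Rightarrow> 'a \<Rightarrow> complex"
  assumes cinner_commute: "cinner x y = cnj (cinner y x)"
    and cinner_add_left: "cinner (x + y) z = cinner x z + cinner y z"
    and cinner_scaleC_left: "cinner (r *\<^sub>C x) y = cnj r * cinner x y"
    and cinner_ge_zero: "Im (cinner x x) = 0 \<and> 0 \<le> Re (cinner x x)"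
    and cinner_eq_zero_iff: "cinner x x = 0 \<longleftrightarrow> x = 0"
    and norm_eq_sqrt_cinner: "norm x = sqrt (Re (cinner x x))"

class complex_hilbert = complex_inner + complete_space

definition bounded_clinear_op :: "('a::complex_inner \<Rightarrow> 'a) \<Rightarrow> bool" where
  "bounded_clinear_op T \<longleftrightarrow>
     (\<forall>x y. T (x + y) = T x + T y) \<and>
     (\<forall>c x. T (c *\<^sub>C x) = c *\<^sub>C T x) \<and>
     (\<exists>K. \<forall>x. norm (T x) \<le> K * norm x)"

definition euclid_op_radius :: "nat \<Rightarrow> (nat \<Rightarrow> 'a::complex_inner \<Rightarrow> 'a) \<Rightarrow> real" where
  "euclid_op_radius d T =
     Sup {sqrt (\<Sum>k<d. (cmod (cinner (T k x) x))\<^sup>2) | x. norm x = 1}"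

end

theory Submission
  imports Defs
begin

lemma scaleC_minus1: "- (x::'a::complex_vector) = (-1) *\<^sub>C x"
proof -
  have "- x = scaleR (-1) x" by simp
  also have "\<dots> = complex_of_real (-1) *\<^sub>C x" by (rule scaleR_scaleC)
  finally show ?thesis by simp
qed

lemma cinner_minus_left: "cinner (- (x::'a::complex_inner)) y = - cinner x y"
  by (subst scaleC_minus1) (simp add: cinner_scaleC_left)

lemma cinner_diff_left: "cinner ((x::'a::complex_inner) - y) z = cinner x z - cinner y z"
  using cinner_add_left[of x "-y" z] by (simp add: cinner_minus_left)

lemma Re_cinner_sym: "Re (cinner (x::'a::complex_inner) y) = Re (cinner y x)"
  by (subst cinner_commute) simp

lemma Re_cinner_self: "Re (cinner (x::'a::complex_inner) x) = (norm x)\<^sup>2"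
  using cinner_ge_zero[of x] norm_eq_sqrt_cinner[of x] by simp

lemma cinner_scaleC_right: "cinner (x::'a::complex_inner) (r *\<^sub>C y) = r * cinner x y"
  by (subst cinner_commute) (simp add: cinner_scaleC_left cinner_commute[of y x])

lemma pearcy:
  fixes S :: "'a::complex_inner \<Rightarrow> 'a"
  assumes add: "\<And>x y. S (x + y) = S x + S y"
    and hyp: "\<And>u. \<bar>Re (cinner (S u) u)\<bar> \<le> Re (cinner u u)"
  shows "Re (cinner (S (S x)) x) \<le> Re (cinner x x)"
proof -
  have S0: "S 0 = 0" using add[of 0 0] by simp
  have Sm: "S (- u) = - S u" for u using add[of u "-u"] S0 by (simp add: eq_neg_iff_add_eq_0 add.commute)
  have Sd: "S (a - b) = S a - S b" for a b using add[of a "-b"] Sm[of b] by simp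
  define y where "y = x + S x"
  define z where "z = x - S x"
  define w where "w = x - S (S x)"
  have wy: "y - S y = w" unfolding y_def w_def add by simp
  have wz: "z + S z = w" unfolding z_def w_def Sd by simp
  have 1: "0 \<le> Re (cinner w y)"
    using hyp[of y] unfolding wy[symmetric] cinner_diff_left by simp
  have 2: "0 \<le> Re (cinner w z)"
    using hyp[of z] unfolding wz[symmetric] cinner_add_left by simp
  have "Re (cinner w y) + Re (cinner w z) = Re (cinner (y + z) w)"
    by (simp add: cinner_add_left Re_cinner_sym[of w])
  also have "y + z = x + x" unfolding y_def z_def by simp
  also have "Re (cinner (x + x) w) = 2 * Re (cinner w x)"
    by (simp add: cinner_add_left Re_cinner_sym[of w])
  finally have "0 \<le> Re (cinner w x)" using 1 2 by simp
  thus ?thesis unfolding w_def cinner_diff_left by simp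
qed

lemma cs_bound:
  fixes y x :: "'a::complex_inner"
  shows "cmod (cinner y x) \<le> ((norm y)\<^sup>2 + (norm x)\<^sup>2) / 2"
proof (cases "cinner y x = 0")
  case True then show ?thesis by simp
next
  case False
  define c where "c = cinner y x"
  define b where "b = c / complex_of_real (cmod c)"
  have cm: "cmod c > 0" using False c_def by simp
  have bc: "cnj b * c = complex_of_real (cmod c)"
  proof -
    have "cnj b * c = (c * cnj c) / complex_of_real (cmod c)"
      unfolding b_def by (simp add: mult.commute)
    also have "\<dots> = complex_of_real ((cmod c)\<^sup>2 / cmod c)"
      by (simp add: complex_norm_square[symmetric])
    also have "\<dots> = complex_of_real (cmod c)" using cm by (simp add: power2_eq_square)
    finally show ?thesis .
  qed
  have bn: "cnj b * b = 1"
    using cm unfolding b_def by (simp add: complex_norm_square[symmetric] field_simps power2_eq_square)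
  define v where "v = b *\<^sub>C y"
  have nv: "(norm v)\<^sup>2 = (norm y)\<^sup>2"
  proof -
    have "cinner v v = (cnj b * b) * cinner y y"
      unfolding v_def by (simp add: cinner_scaleC_left cinner_scaleC_right mult.assoc)
    then have "cinner v v = cinner y y" using bn by simp
    then show ?thesis unfolding Re_cinner_self[symmetric] by simp
  qed
  have rv: "Re (cinner v x) = cmod c"
    unfolding v_def by (simp add: cinner_scaleC_left c_def[symmetric] bc)
  have "0 \<le> Re (cinner (v - x) (v - x))" using cinner_ge_zero by blast
  also have "Re (cinner (v - x) (v - x)) = (norm v)\<^sup>2 + (norm x)\<^sup>2 - 2 * Re (cinner v x)"
    unfolding cinner_diff_left Re_cinner_self[symmetric]
    by (simp add: Re_cinner_sym[of _ "v - x"] cinner_diff_left Re_cinner_sym[of v x])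
  finally show ?thesis using nv rv c_def by simp
qed

lemma le_of_forall_gt:
  fixes a W :: real
  assumes "0 \<le> W" "\<And>s. s > W \<Longrightarrow> a \<le> s\<^sup>2"
  shows "a \<le> W\<^sup>2"
proof (rule ccontr)
  assume "\<not> a \<le> W\<^sup>2"
  then have aw: "W\<^sup>2 < a" by simp
  then have "W < sqrt a" using assms(1) real_less_rsqrt by blast
  define s where "s = (W + sqrt a) / 2"
  have "s > W" "s < sqrt a" "0 \<le> s" using \<open>W < sqrt a\<close> assms(1) unfolding s_def by auto
  then have "s\<^sup>2 < (sqrt a)\<^sup>2" by (simp add: power_strict_mono)
  also have "\<dots> = a" using aw by (smt (verit) real_sqrt_pow2 zero_le_power2)
  finally show False using assms(2)[OF \<open>s > W\<close>] by simp
qed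

lemma power2_numrad:
  fixes T :: "'a::complex_inner \<Rightarrow> 'a"
  assumes add: "\<And>x y. T (x + y) = T x + T y"
    and sc: "\<And>c x. T (c *\<^sub>C x) = c *\<^sub>C T x"
    and W: "\<And>u. cmod (cinner (T u) u) \<le> W * (norm u)\<^sup>2"
    and x: "norm x = 1"
  shows "cmod (cinner (T (T x)) x) \<le> W\<^sup>2"
proof -
  have W0: "0 \<le> W" using W[of x] x norm_ge_zero[of "cinner (T x) x"] by (simp del: norm_ge_zero)
  define a where "a = cinner (T (T x)) x"
  have "cmod a \<le> s\<^sup>2" if sW: "s > W" for s
  proof (cases "a = 0")
    case True then show ?thesis by simp
  next
    case False
    have s0: "s > 0" using sW W0 by simp
    have ca: "cmod a > 0" using False by simp
    define g where "g = csqrt (a / complex_of_real (cmod a)) / complex_of_real s"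
    have cg: "cmod g = 1 / s"
      unfolding g_def using ca s0 by (simp add: norm_divide)
    have gg: "g * g = (a / complex_of_real (cmod a)) / complex_of_real (s\<^sup>2)"
      unfolding g_def by (simp add: power2_eq_square[symmetric] power_divide)
    define S where "S u = g *\<^sub>C T u" for u
    have Sadd: "S (u + v) = S u + S v" for u v
      unfolding S_def add scaleC_add_right ..
    have Shyp: "\<bar>Re (cinner (S u) u)\<bar> \<le> Re (cinner u u)" for u
    proof -
      have "\<bar>Re (cinner (S u) u)\<bar> \<le> cmod (cinner (S u) u)" by (rule abs_Re_le_cmod)
      also have "\<dots> = cmod g * cmod (cinner (T u) u)"
        unfolding S_def cinner_scaleC_left by (simp add: norm_mult)
      also have "\<dots> \<le> (1 / s) * (W * (norm u)\<^sup>2)"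
        unfolding cg using W[of u] s0 by (simp add: divide_right_mono)
      also have "\<dots> \<le> (norm u)\<^sup>2"
        using sW s0 by (simp add: field_simps mult_right_mono)
      finally show ?thesis unfolding Re_cinner_self .
    qed
    have "Re (cinner (S (S x)) x) \<le> Re (cinner x x)" by (rule pearcy[OF Sadd Shyp])
    moreover have SS: "S (S x) = (g * g) *\<^sub>C T (T x)"
      unfolding S_def sc scaleC_scaleC ..
    ultimately have "Re (cinner ((g * g) *\<^sub>C T (T x)) x) \<le> 1"
      using x unfolding Re_cinner_self by simp
    then have "Re (cnj (g * g) * a) \<le> 1"
      unfolding a_def cinner_scaleC_left .
    moreover have "cnj (g * g) * a = complex_of_real (cmod a / s\<^sup>2)"
    proof -
      have "cnj (g * g) * a = (a * cnj a) / complex_of_real (cmod a) / complex_of_real (s\<^sup>2)"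
        unfolding gg by (simp add: mult.commute)
      also have "\<dots> = complex_of_real ((cmod a)\<^sup>2 / cmod a / s\<^sup>2)"
        by (simp add: complex_norm_square[symmetric])
      also have "\<dots> = complex_of_real (cmod a / s\<^sup>2)" using ca by (simp add: power2_eq_square)
      finally show ?thesis .
    qed
    ultimately have "cmod a / s\<^sup>2 \<le> 1" by (metis Re_complex_of_real)
    then show ?thesis using s0 by (simp add: field_simps)
  qed
  then show ?thesis unfolding a_def[symmetric] by (intro le_of_forall_gt[OF W0]) auto
qed


lemma normalize_cinner:
  fixes T :: "'a::complex_inner \<Rightarrow> 'a"
  assumes add: "\<And>x y. T (x + y) = T x + T y"
    and sc: "\<And>c x. T (c *\<^sub>C x) = c *\<^sub>C T x"
    and W: "\<And>x. norm x = 1 \<Longrightarrow> cmod (cinner (T x) x) \<le> W"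
  shows "cmod (cinner (T u) u) \<le> W * (norm u)\<^sup>2"
proof (cases "u = 0")
  case True
  have "T 0 = 0" using add[of 0 0] by simp
  then show ?thesis using True cinner_eq_zero_iff[of "0::'a"] by simp
next
  case False
  define r where "r = inverse (norm u)"
  have r0: "r > 0" using False r_def by simp
  define x where "x = complex_of_real r *\<^sub>C u"
  have "x = scaleR r u" unfolding x_def by (simp add: scaleR_scaleC)
  then have nx: "norm x = 1" using False r_def by simp
  have "cinner (T x) x = complex_of_real (r * r) * cinner (T u) u"
    unfolding x_def sc cinner_scaleC_left cinner_scaleC_right by (simp add: mult.assoc)
  then have "cmod (cinner (T x) x) = r * r * cmod (cinner (T u) u)"
    using r0 by (simp add: norm_mult)
  then have "r * r * cmod (cinner (T u) u) \<le> W" using W[OF nx] by simp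
  then have "cmod (cinner (T u) u) \<le> W * (norm u * norm u)"
    using False unfolding r_def by (simp add: field_simps)
  then show ?thesis by (simp add: power2_eq_square)
qed

theorem corollary2p3:
  fixes d :: nat and T :: "nat \<Rightarrow> 'a::complex_hilbert \<Rightarrow> 'a"
  assumes "d \<ge> 1"
    and "\<exists>x::'a. x \<noteq> 0"
    and "\<forall>k<d. bounded_clinear_op (T k)"
  shows "(1 / real d) * euclid_op_radius d (\<lambda>k. T k \<circ> T k) \<le> (euclid_op_radius d T)\<^sup>2"
proof -
  define A where "A = {sqrt (\<Sum>k<d. (cmod (cinner (T k x) x))\<^sup>2) | x. norm x = 1}"
  define A2 where "A2 = {sqrt (\<Sum>k<d. (cmod (cinner ((T k \<circ> T k) x) x))\<^sup>2) | x::'a. norm x = 1}"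
  define W where "W = euclid_op_radius d T"
  have WA: "W = Sup A" unfolding W_def A_def euclid_op_radius_def ..
  have W2: "euclid_op_radius d (\<lambda>k. T k \<circ> T k) = Sup A2"
    unfolding A2_def euclid_op_radius_def ..
  obtain x0 :: 'a where x0: "x0 \<noteq> 0" using assms(2) by blast
  define x1 where "x1 = scaleR (inverse (norm x0)) x0"
  have x1: "norm x1 = 1" unfolding x1_def using x0 by simp
  have Ane: "A \<noteq> {}" and A2ne: "A2 \<noteq> {}" unfolding A_def A2_def using x1 by blast+
  have add: "\<And>x y. T k (x + y) = T k x + T k y"
    and sc: "\<And>c x. T k (c *\<^sub>C x) = c *\<^sub>C T k x" if "k < d" for k
    using assms(3) that unfolding bounded_clinear_op_def by blast+
  have "\<forall>k. \<exists>K. k < d \<longrightarrow> (\<forall>x. norm (T k x) \<le> K * norm x)"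
    using assms(3) unfolding bounded_clinear_op_def by blast
  then obtain K where K: "\<And>k x. k < d \<Longrightarrow> norm (T k x) \<le> K k * norm x"
    by metis
  have bdd: "bdd_above A"
  proof (rule bdd_aboveI)
    fix y assume "y \<in> A"
    then obtain x where x: "norm x = 1" and y: "y = sqrt (\<Sum>k<d. (cmod (cinner (T k x) x))\<^sup>2)"
      unfolding A_def by blast
    have "(\<Sum>k<d. (cmod (cinner (T k x) x))\<^sup>2) \<le> (\<Sum>k<d. (((K k)\<^sup>2 + 1) / 2)\<^sup>2)"
    proof (rule sum_mono)
      fix k assume "k \<in> {..<d}"
      then have kd: "k < d" by simp
      have "norm (T k x) \<le> K k" using K[OF kd, of x] x by simp
      then have "(norm (T k x))\<^sup>2 \<le> (K k)\<^sup>2" by (simp add: power_mono)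
      then have "cmod (cinner (T k x) x) \<le> ((K k)\<^sup>2 + 1) / 2"
        using cs_bound[of "T k x" x] x by simp
      then show "(cmod (cinner (T k x) x))\<^sup>2 \<le> (((K k)\<^sup>2 + 1) / 2)\<^sup>2"
        by (simp add: power_mono)
    qed
    then show "y \<le> sqrt (\<Sum>k<d. (((K k)\<^sup>2 + 1) / 2)\<^sup>2)" unfolding y by simp
  qed
  have W0: "0 \<le> W"
  proof -
    have "sqrt (\<Sum>k<d. (cmod (cinner (T k x1) x1))\<^sup>2) \<in> A" unfolding A_def using x1 by blast
    then have "sqrt (\<Sum>k<d. (cmod (cinner (T k x1) x1))\<^sup>2) \<le> W" unfolding WA
      using bdd by (rule cSup_upper)
    moreover have "0 \<le> sqrt (\<Sum>k<d. (cmod (cinner (T k x1) x1))\<^sup>2)"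
      by (intro real_sqrt_ge_zero sum_nonneg) simp
    ultimately show ?thesis by (rule order_trans[rotated])
  qed
  have unitW: "cmod (cinner (T k x) x) \<le> W" if kd: "k < d" and x: "norm x = 1" for k x
  proof -
    have "(cmod (cinner (T k x) x))\<^sup>2 \<le> (\<Sum>k<d. (cmod (cinner (T k x) x))\<^sup>2)"
      using kd by (intro member_le_sum) auto
    then have "cmod (cinner (T k x) x) \<le> sqrt (\<Sum>k<d. (cmod (cinner (T k x) x))\<^sup>2)"
      by (rule real_le_rsqrt)
    also have "\<dots> \<le> W" unfolding WA
      using x by (intro cSup_upper[OF _ bdd]) (auto simp: A_def)
    finally show ?thesis .
  qed
  have sq: "cmod (cinner ((T k \<circ> T k) x) x) \<le> W\<^sup>2" if kd: "k < d" and x: "norm x = 1" for k x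
    unfolding o_def
    by (rule power2_numrad[OF add[OF kd] sc[OF kd] normalize_cinner[OF add[OF kd] sc[OF kd] unitW[OF kd]] x])
  have "Sup A2 \<le> real d * W\<^sup>2"
  proof (rule cSup_least[OF A2ne])
    fix y assume "y \<in> A2"
    then obtain x :: 'a where x: "norm x = 1"
      and y: "y = sqrt (\<Sum>k<d. (cmod (cinner ((T k \<circ> T k) x) x))\<^sup>2)"
      unfolding A2_def by blast
    have "(\<Sum>k<d. (cmod (cinner ((T k \<circ> T k) x) x))\<^sup>2) \<le> (\<Sum>k<d. (W\<^sup>2)\<^sup>2)"
      by (intro sum_mono power_mono) (use sq x in auto)
    also have "\<dots> = (sqrt (real d) * W\<^sup>2)\<^sup>2" by (simp add: power_mult_distrib)
    finally have "y \<le> sqrt ((sqrt (real d) * W\<^sup>2)\<^sup>2)" unfolding y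
      by (rule real_sqrt_le_mono)
    also have "\<dots> = sqrt (real d) * W\<^sup>2" by (rule real_sqrt_unique) auto
    also have "\<dots> \<le> real d * W\<^sup>2"
    proof (rule mult_right_mono)
      have s1: "1 \<le> sqrt (real d)" using assms(1) by simp
      have "sqrt (real d) * 1 \<le> sqrt (real d) * sqrt (real d)"
        by (rule mult_left_mono[OF s1]) simp
      then show "sqrt (real d) \<le> real d" by simp
    qed simp
    finally show "y \<le> real d * W\<^sup>2" .
  qed
  then have "(1 / real d) * Sup A2 \<le> (1 / real d) * (real d * W\<^sup>2)"
    by (intro mult_left_mono) auto
  also have "\<dots> = W\<^sup>2" using assms(1) by simp
  finally show ?thesis unfolding W2 W_def .
qed

end
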